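(* Let $\mu$ be a probability measure on $\mathbb{R}$. Let $n\in\mathbb{N}$ and let $\nu=\sum_{i=1}^n\nu^{(i)}$, where the $\nu^{(i)}$ are finite non-negative measures on $\mathbb{R}$ with $\nu^{(i)}(\mathbb{R})=a_i>0$. Assume that $H(a_i^{-1}\nu^{(i)})$ is finite for all $i$. Let $\nu_t=D_t^*(\nu)$ and $\nu_t^{(i)}=D_t^*(\nu^{(i)})$. Then $$\liminf_{t\to0}\frac{H(\mu*\nu_t)}{|\log t|}=\liminf_{t\to0}\frac{1}{|\log t|}\sum_{i=1}^na_iH(a_i^{-1}\mu*\nu_t^{(i)}).$$
   Context: For $t>0$, $D_t:\mathbb{R}\to\mathbb{R}$ is $x\mapsto tx$, and $D_t^*$ denotes push-forward by $D_t$. For non-negative measurable $q$, $H(q(x)\,dx)=\int q\log q\,dx$, even when $q\,dx$ is not a probability measure. *)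

theory Defs
  imports "HOL-Probability.Probability"
begin

definition has_lebesgue_density :: "real measure \<Rightarrow> (real \<Rightarrow> ennreal) \<Rightarrow> bool" where
  "has_lebesgue_density M q \<longleftrightarrow> q \<in> borel_measurable borel \<and> M = density lborel q"

definition ent :: "real measure \<Rightarrow> ereal" where
  "ent M = (if \<exists>q. has_lebesgue_density M q then
     (let q = (\<lambda>x. enn2real ((SOME q. has_lebesgue_density M q) x));
          f = (\<lambda>x. q x * ln (q x))
      in enn2ereal (\<integral>\<^sup>+ x. ennreal (f x) \<partial>lborel)
         - enn2ereal (\<integral>\<^sup>+ x. ennreal (- f x) \<partial>lborel))
   else \<infinity>)"

definition dil :: "real \<Rightarrow> real measure \<Rightarrow> real measure" where
  "dil t M = distr M borel (\<lambda>x. t * x)"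

end

theory Submission imports Defs "HOL-Real_Asymp.Real_Asymp" begin

lemma k_tends: "((\<lambda>t::real. 1 / \<bar>ln t\<bar>) \<longlongrightarrow> 0) (at_right 0)"
  by real_asymp

lemma liminf_half:
  fixes X Y :: "real \<Rightarrow> ereal" and C :: real
  assumes C: "C \<ge> 0" and b: "\<forall>\<^sub>F t in at_right 0. Y t \<le> X t + ereal C"
  shows "Liminf (at_right 0) (\<lambda>t. ereal (1/\<bar>ln t\<bar>) * Y t)
       \<le> Liminf (at_right 0) (\<lambda>t. ereal (1/\<bar>ln t\<bar>) * X t)"
proof (rule ereal_le_epsilon2)
  fix e :: real assume e: "0 < e"
  have ev1: "\<forall>\<^sub>F t in at_right 0. 1/\<bar>ln t\<bar> * C < e"
  proof -
    have "((\<lambda>t::real. 1 / \<bar>ln t\<bar> * C) \<longlongrightarrow> 0 * C) (at_right 0)"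
      by (intro tendsto_intros k_tends)
    then show ?thesis using e by (simp add: order_tendsto_iff)
  qed
  have "\<forall>\<^sub>F t in at_right 0. ereal (1/\<bar>ln t\<bar>) * Y t \<le> ereal (1/\<bar>ln t\<bar>) * X t + ereal e"
    using ev1 b
  proof eventually_elim
    case (elim t)
    define k where "k = 1/\<bar>ln t\<bar>"
    have k0: "k \<ge> 0" by (simp add: k_def)
    have kc: "k * C < e" using elim by (simp add: k_def)
    have "ereal k * Y t \<le> ereal k * (X t + ereal C)"
      using elim k0 by (intro ereal_mult_left_mono) auto
    also have "\<dots> \<le> ereal k * X t + ereal e"
      using kc k0 C by (cases "X t") (auto simp: distrib_left)
    finally show ?case by (simp add: k_def)
  qed
  then have "Liminf (at_right 0) (\<lambda>t. ereal (1/\<bar>ln t\<bar>) * Y t)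
     \<le> Liminf (at_right 0) (\<lambda>t. ereal (1/\<bar>ln t\<bar>) * X t + ereal e)"
    by (rule Liminf_mono)
  also have "\<dots> = Liminf (at_right 0) (\<lambda>t. ereal (1/\<bar>ln t\<bar>) * X t) + ereal e"
    by (rule Liminf_add_ereal_right) auto
  finally show "Liminf (at_right 0) (\<lambda>t. ereal (1/\<bar>ln t\<bar>) * Y t)
     \<le> Liminf (at_right 0) (\<lambda>t. ereal (1/\<bar>ln t\<bar>) * X t) + ereal e" .
qed

definition phi :: "real \<Rightarrow> real" where "phi x = x * ln x"

lemma xlog_le: "(x::real) \<ge> 0 \<Longrightarrow> y > 0 \<Longrightarrow> x * ln (y / x) \<le> y"
proof (cases "x = 0")
  case False
  assume "x \<ge> 0" "y > 0"
  then have x: "x > 0" using False by (simp add: less_le)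
  have "ln (y/x) \<le> y/x - 1" using x \<open>y>0\<close> by (intro ln_le_minus_one) simp
  then have "x * ln (y/x) \<le> x * (y/x - 1)" using x by (intro mult_left_mono) auto
  also have "\<dots> = y - x" using x by (simp add: field_simps)
  finally show ?thesis using x by simp
qed simp

lemma phi_scale: "x \<ge> 0 \<Longrightarrow> a > 0 \<Longrightarrow> a * phi (x / a) = phi x - x * ln a"
  by (cases "x = 0") (auto simp: phi_def ln_div field_simps)

lemma phi_neg_le1: "x \<ge> 0 \<Longrightarrow> - phi x \<le> 1"
proof (cases "x = 0")
  case False
  assume "x \<ge> 0" then have x: "x > 0" using False by simp
  have "ln (1/x) \<le> 1/x - 1" using x by (intro ln_le_minus_one) simp
  then have "- ln x \<le> 1/x - 1" using x by (simp add: ln_div)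
  then have "x * (- ln x) \<le> x * (1/x - 1)" using x by (intro mult_left_mono) auto
  also have "\<dots> = 1 - x" using x by (simp add: field_simps)
  finally show ?thesis using x by (simp add: phi_def)
qed (simp add: phi_def)

lemma phi_pos_mono: "0 \<le> x \<Longrightarrow> x \<le> y \<Longrightarrow> max 0 (phi x) \<le> max 0 (phi y)"
proof -
  assume xy: "0 \<le> x" "x \<le> y"
  show ?thesis
  proof (cases "x \<le> 1")
    case True
    have "phi x \<le> 0"
    proof (cases "x = 0")
      case False
      then have "ln x \<le> 0" using xy True by simp
      then show ?thesis using xy by (simp add: phi_def mult_nonneg_nonpos)
    qed (simp add: phi_def)
    then show ?thesis by simp
  next
    case False
    then have "x * ln x \<le> y * ln y" using xy
      by (intro mult_mono) auto
    then show ?thesis by (simp add: phi_def)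
  qed
qed

lemma phi_neg_bound: "0 \<le> x \<Longrightarrow> x \<le> y \<Longrightarrow> max 0 (- phi x) \<le> max 0 (- phi y) + y"
proof -
  assume xy: "0 \<le> x" "x \<le> y"
  show ?thesis
  proof (cases "y \<ge> 1")
    case True
    then show ?thesis using phi_neg_le1[OF xy(1)] by simp
  next
    case False
    show ?thesis
    proof (cases "x = 0")
      case True then show ?thesis using xy by (simp add: phi_def)
    next
      case x0: False
      then have x: "x > 0" using xy by simp
      then have y: "y > 0" using xy by simp
      have "- phi x = - x * ln y + x * ln (y / x)" using x y by (simp add: phi_def ln_div algebra_simps)
      also have "- x * ln y \<le> - y * ln y"
        using False xy y by (intro mult_right_mono_neg) auto
      also have "x * ln (y / x) \<le> y" by (rule xlog_le) (use xy y in auto)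
      finally have h: "- phi x \<le> - phi y + y" by (simp add: phi_def)
      show ?thesis using h y max.cobounded1[of 0 "-phi y"] max.cobounded2[of 0 "-phi y"] by linarith
    qed
  qed
qed

lemma phi_sum_lower:
  assumes "finite I" "\<And>i. i \<in> I \<Longrightarrow> x i \<ge> 0"
  shows "(\<Sum>i\<in>I. phi (x i)) \<le> phi (\<Sum>i\<in>I. x i)"
proof -
  let ?f = "\<Sum>i\<in>I. x i"
  have "phi (x i) \<le> x i * ln ?f" if i: "i \<in> I" for i
  proof (cases "x i = 0")
    case False
    then have xi: "x i > 0" using assms i by force
    have "x i \<le> ?f" using assms i by (intro member_le_sum) auto
    then have "ln (x i) \<le> ln ?f" using xi by simp
    then show ?thesis using xi by (simp add: phi_def)
  qed (simp add: phi_def)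
  then have "(\<Sum>i\<in>I. phi (x i)) \<le> (\<Sum>i\<in>I. x i * ln ?f)" by (rule sum_mono)
  also have "\<dots> = phi ?f" by (simp add: phi_def sum_distrib_right)
  finally show ?thesis .
qed

lemma phi_sum_upper:
  assumes "finite I" "\<And>i. i \<in> I \<Longrightarrow> x i \<ge> 0"
  shows "phi (\<Sum>i\<in>I. x i) \<le> (\<Sum>i\<in>I. phi (x i)) + real (card I) * (\<Sum>i\<in>I. x i)"
proof -
  let ?f = "\<Sum>i\<in>I. x i"
  have "x i * ln ?f \<le> phi (x i) + ?f" if i: "i \<in> I" for i
  proof (cases "x i = 0")
    case False
    then have xi: "x i > 0" using assms i by force
    have "x i \<le> ?f" using assms i by (intro member_le_sum) auto
    then have fp: "?f > 0" using xi by simp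
    have "x i * ln ?f = phi (x i) + x i * ln (?f / x i)" using xi fp
      by (simp add: phi_def ln_div algebra_simps)
    also have "x i * ln (?f / x i) \<le> ?f" using xi fp by (intro xlog_le) auto
    finally show ?thesis by simp
  next
    case True
    have "0 \<le> ?f" using assms by (intro sum_nonneg) auto
    then show ?thesis using True by (simp add: phi_def)
  qed
  then have "(\<Sum>i\<in>I. x i * ln ?f) \<le> (\<Sum>i\<in>I. phi (x i) + ?f)" by (rule sum_mono)
  then show ?thesis by (simp add: phi_def sum_distrib_right sum.distrib)
qed

lemma ent_density:
  assumes G[measurable]: "G \<in> borel_measurable borel"
  shows "ent (density lborel G) =
    enn2ereal (\<integral>\<^sup>+x. ennreal (phi (enn2real (G x))) \<partial>lborel)
    - enn2ereal (\<integral>\<^sup>+x. ennreal (- phi (enn2real (G x))) \<partial>lborel)"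
proof -
  have ex: "\<exists>q. has_lebesgue_density (density lborel G) q"
    unfolding has_lebesgue_density_def using G by blast
  define q where "q = (SOME q. has_lebesgue_density (density lborel G) q)"
  have hq: "has_lebesgue_density (density lborel G) q"
    unfolding q_def using someI_ex[OF ex] .
  then have q[measurable]: "q \<in> borel_measurable borel" and eq: "density lborel G = density lborel q"
    by (auto simp: has_lebesgue_density_def)
  have ae: "AE x in lborel. G x = q x"
    by (rule sigma_finite_measure.density_unique[OF sigma_finite_lborel]) (use eq in auto)
  have 1: "(\<integral>\<^sup>+x. ennreal (phi (enn2real (q x))) \<partial>lborel) = (\<integral>\<^sup>+x. ennreal (phi (enn2real (G x))) \<partial>lborel)"
    using ae by (intro nn_integral_cong_AE) auto
  have 2: "(\<integral>\<^sup>+x. ennreal (- phi (enn2real (q x))) \<partial>lborel) = (\<integral>\<^sup>+x. ennreal (- phi (enn2real (G x))) \<partial>lborel)"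
    using ae by (intro nn_integral_cong_AE) auto
  show ?thesis
    unfolding ent_def using ex 1 2 by (simp add: Let_def q_def[symmetric] phi_def)
qed

lemma scale_density:
  assumes [measurable]: "G \<in> borel_measurable borel" and r: "r \<ge> 0"
  shows "scale_measure (ennreal r) (density lborel G) = density lborel (\<lambda>x. ennreal r * G x)"
proof (rule measure_eqI)
  fix A assume "A \<in> sets (scale_measure (ennreal r) (density lborel G))"
  then have [measurable]: "A \<in> sets borel" by simp
  show "emeasure (scale_measure (ennreal r) (density lborel G)) A = emeasure (density lborel (\<lambda>x. ennreal r * G x)) A"
    by (simp add: emeasure_density nn_integral_cmult[symmetric] mult.assoc)
qed simp

lemma conv_density:
  fixes M :: "real measure" and g :: "real \<Rightarrow> ennreal"
  assumes M: "finite_measure M" and [measurable_cong]: "sets M = sets borel"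
    and g[measurable]: "g \<in> borel_measurable borel" and N: "finite_measure (density lborel g)"
  shows "M \<star> density lborel g = density lborel (\<lambda>x. \<integral>\<^sup>+y. g (x - y) \<partial>M)"
proof (rule measure_eqI)
  interpret M: finite_measure M by fact
  interpret P: pair_sigma_finite M lborel
    by (intro pair_sigma_finite.intro M.sigma_finite_measure) (rule lborel.sigma_finite_measure_axioms)
  fix A assume "A \<in> sets (M \<star> density lborel g)"
  then have [measurable]: "A \<in> sets borel" by simp
  have "emeasure (M \<star> density lborel g) A = \<integral>\<^sup>+x. \<integral>\<^sup>+y. indicator A (x + y) \<partial>density lborel g \<partial>M"
    by (rule convolution_emeasure') (use M N assms(2) in auto)
  also have "\<dots> = \<integral>\<^sup>+x. \<integral>\<^sup>+z. g (z - x) * indicator A z \<partial>lborel \<partial>M"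
  proof (rule nn_integral_cong)
    fix x :: real
    have "(\<integral>\<^sup>+y. indicator A (x + y) \<partial>density lborel g) = \<integral>\<^sup>+y. g y * indicator A (x + y) \<partial>lborel"
      by (simp add: nn_integral_density)
    also have "\<dots> = \<integral>\<^sup>+z. g (z - x) * indicator A z \<partial>lborel"
      by (subst nn_integral_real_affine[where c=1 and t=x]) auto
    finally show "(\<integral>\<^sup>+y. indicator A (x + y) \<partial>density lborel g) = \<integral>\<^sup>+z. g (z - x) * indicator A z \<partial>lborel" .
  qed
  also have "\<dots> = \<integral>\<^sup>+z. \<integral>\<^sup>+x. g (z - x) * indicator A z \<partial>M \<partial>lborel"
  proof -
    have "(\<lambda>(x,z). g (z - x) * indicator A z) \<in> borel_measurable (M \<Otimes>\<^sub>M lborel)" by measurable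
    from P.Fubini'[OF this] show ?thesis by simp
  qed
  also have "\<dots> = \<integral>\<^sup>+z. (\<integral>\<^sup>+x. g (z - x) \<partial>M) * indicator A z \<partial>lborel"
    by (intro nn_integral_cong nn_integral_multc) measurable
  also have "\<dots> = emeasure (density lborel (\<lambda>x. \<integral>\<^sup>+y. g (x - y) \<partial>M)) A"
  proof -
    have mb: "(\<lambda>z. \<integral>\<^sup>+x. g (z - x) \<partial>M) \<in> borel_measurable borel"
      by (rule M.borel_measurable_nn_integral) measurable
    show ?thesis using mb by (subst emeasure_density) auto
  qed
  finally show "emeasure (M \<star> density lborel g) A = emeasure (density lborel (\<lambda>x. \<integral>\<^sup>+y. g (x - y) \<partial>M)) A" .
qed simp

lemma dil_density:
  assumes t: "t > 0" and g[measurable]: "g \<in> borel_measurable borel"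
  shows "dil t (density lborel g) = density lborel (\<lambda>x. ennreal (1/t) * g (x / t))"
proof (rule measure_eqI)
  fix A assume "A \<in> sets (dil t (density lborel g))"
  then have [measurable]: "A \<in> sets borel" by (simp add: dil_def)
  have "emeasure (dil t (density lborel g)) A = \<integral>\<^sup>+y. indicator A (t * y) \<partial>density lborel g"
  proof -
    have pre[measurable]: "(\<lambda>y. t*y) -` A \<in> sets borel"
      using measurable_sets[of "\<lambda>y::real. t*y" borel borel A] by simp
    have "emeasure (dil t (density lborel g)) A = emeasure (density lborel g) ((\<lambda>y. t*y) -` A)"
      unfolding dil_def by (subst emeasure_distr) auto
    also have "\<dots> = \<integral>\<^sup>+y. indicator ((\<lambda>y. t*y) -` A) y \<partial>density lborel g"
      by (rule nn_integral_indicator[symmetric]) simp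
    finally show ?thesis by (simp add: indicator_def)
  qed
  also have "\<dots> = \<integral>\<^sup>+y. g y * indicator A (t * y) \<partial>lborel"
    by (simp add: nn_integral_density)
  also have "\<dots> = \<integral>\<^sup>+x. ennreal (1/t) * g (x / t) * indicator A x \<partial>lborel"
  proof -
    have "(\<integral>\<^sup>+x. ennreal (1/t) * g (x / t) * indicator A x \<partial>lborel)
       = ennreal \<bar>t\<bar> * (\<integral>\<^sup>+y. ennreal (1/t) * g ((0 + t * y) / t) * indicator A (0 + t * y) \<partial>lborel)"
      by (rule nn_integral_real_affine) (use t in auto)
    also have "\<dots> = ennreal t * (ennreal (1/t) * (\<integral>\<^sup>+y. g y * indicator A (t * y) \<partial>lborel))"
      using t by (simp add: nn_integral_cmult mult.assoc)
    also have "\<dots> = (\<integral>\<^sup>+y. g y * indicator A (t * y) \<partial>lborel)"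
      using t by (simp add: mult.assoc[symmetric] ennreal_mult[symmetric])
    finally show ?thesis by simp
  qed
  also have "\<dots> = emeasure (density lborel (\<lambda>x. ennreal (1/t) * g (x / t))) A"
    by (simp add: emeasure_density)
  finally show "emeasure (dil t (density lborel g)) A = emeasure (density lborel (\<lambda>x. ennreal (1/t) * g (x / t))) A" .
qed (simp add: dil_def)

definition Eh :: "(real \<Rightarrow> real) \<Rightarrow> ereal" where
  "Eh h = enn2ereal (\<integral>\<^sup>+x. ennreal (h x) \<partial>lborel) - enn2ereal (\<integral>\<^sup>+x. ennreal (- h x) \<partial>lborel)"

lemma enn2ereal_fin: "(x::ennreal) \<noteq> \<infinity> \<Longrightarrow> enn2ereal x = ereal (enn2real x)"
  by (cases x rule: ennreal_cases) auto

lemma Eh_integral: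
  assumes "integrable lborel h"
  shows "Eh h = ereal (integral\<^sup>L lborel h)"
proof -
  have m: "h \<in> borel_measurable lborel" using assms by auto
  have "(\<integral>\<^sup>+x. ennreal (h x) \<partial>lborel) \<noteq> \<infinity>" "(\<integral>\<^sup>+x. ennreal (- h x) \<partial>lborel) \<noteq> \<infinity>"
    using assms unfolding real_integrable_def by auto
  then show ?thesis
    unfolding Eh_def real_lebesgue_integral_def[OF assms]
    by (simp add: enn2ereal_fin)
qed

lemma pos_part_bound:
  fixes v w :: "real \<Rightarrow> real"
  assumes [measurable]: "v \<in> borel_measurable borel" "w \<in> borel_measurable borel" "F \<in> borel_measurable borel"
    and F: "\<And>x. F x \<ge> 0" and FK: "(\<integral>\<^sup>+x. ennreal (F x) \<partial>lborel) \<le> ennreal K" and c: "c \<ge> 0"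
    and ae: "AE x in lborel. v x \<le> max 0 (w x) + c * F x"
  shows "(\<integral>\<^sup>+x. ennreal (v x) \<partial>lborel) \<le> (\<integral>\<^sup>+x. ennreal (w x) \<partial>lborel) + ennreal (c * K)"
proof -
  have "(\<integral>\<^sup>+x. ennreal (v x) \<partial>lborel) \<le> (\<integral>\<^sup>+x. ennreal (w x) + ennreal c * ennreal (F x) \<partial>lborel)"
  proof (rule nn_integral_mono_AE)
    show "AE x in lborel. ennreal (v x) \<le> ennreal (w x) + ennreal c * ennreal (F x)"
      using ae
    proof eventually_elim
      case (elim x)
      have "ennreal (v x) \<le> ennreal (max 0 (w x) + c * F x)" using elim by (rule ennreal_leI)
      also have "\<dots> = ennreal (max 0 (w x)) + ennreal (c * F x)"
        using c F by (intro ennreal_plus) auto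
      also have "ennreal (max 0 (w x)) = ennreal (w x)" by (simp add: ennreal_max_0)
      finally show ?case using c F by (simp add: ennreal_mult)
    qed
  qed
  also have "\<dots> = (\<integral>\<^sup>+x. ennreal (w x) \<partial>lborel) + ennreal c * (\<integral>\<^sup>+x. ennreal (F x) \<partial>lborel)"
    by (simp add: nn_integral_add nn_integral_cmult)
  also have "\<dots> \<le> (\<integral>\<^sup>+x. ennreal (w x) \<partial>lborel) + ennreal c * ennreal K"
    by (intro add_left_mono mult_left_mono FK) auto
  finally show ?thesis using c by (simp add: ennreal_mult')
qed

lemma ennreal_sum_le: "finite I \<Longrightarrow> ennreal (\<Sum>i\<in>I. (u i :: real)) \<le> (\<Sum>i\<in>I. ennreal (u i))"
proof (induction I rule: finite_induct)
  case (insert i I)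
  have "ennreal (\<Sum>j\<in>insert i I. u j) = ennreal (u i + (\<Sum>j\<in>I. u j))" using insert by simp
  also have "\<dots> \<le> ennreal (u i) + ennreal (\<Sum>j\<in>I. u j)"
  proof -
    have "ennreal (u i + (\<Sum>j\<in>I. u j)) \<le> ennreal (max 0 (u i) + max 0 (\<Sum>j\<in>I. u j))"
      by (intro ennreal_leI) auto
    also have "\<dots> = ennreal (max 0 (u i)) + ennreal (max 0 (\<Sum>j\<in>I. u j))"
      by (intro ennreal_plus) auto
    finally show ?thesis by (simp add: ennreal_max_0)
  qed
  also have "\<dots> \<le> ennreal (u i) + (\<Sum>j\<in>I. ennreal (u j))"
    using insert by (intro add_left_mono) auto
  finally show ?case using insert by simp
qed simp

lemma E_compare:
  fixes h F :: "real \<Rightarrow> real" and u :: "'i \<Rightarrow> real \<Rightarrow> real"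
  assumes I: "finite I"
    and [measurable]: "h \<in> borel_measurable borel" "F \<in> borel_measurable borel"
    and um[measurable]: "\<And>i. i \<in> I \<Longrightarrow> u i \<in> borel_measurable borel"
    and F: "\<And>x. F x \<ge> 0" and FK: "(\<integral>\<^sup>+x. ennreal (F x) \<partial>lborel) \<le> ennreal K"
    and c: "c \<ge> 0" and K: "K \<ge> 0"
    and ae1: "AE x in lborel. \<bar>h x - (\<Sum>i\<in>I. u i x)\<bar> \<le> c * F x"
    and ae2: "\<And>i. i \<in> I \<Longrightarrow> AE x in lborel. max 0 (u i x) \<le> max 0 (h x) + c * F x"
    and ae3: "\<And>i. i \<in> I \<Longrightarrow> AE x in lborel. max 0 (- u i x) \<le> max 0 (- h x) + c * F x"
  shows "Eh h \<le> (\<Sum>i\<in>I. Eh (u i)) + ereal (c*K) \<and> (\<Sum>i\<in>I. Eh (u i)) \<le> Eh h + ereal (c*K)"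
proof -
  define P where "P v = (\<integral>\<^sup>+x. ennreal (v x) \<partial>lborel)" for v :: "real \<Rightarrow> real"
  define N where "N v = (\<integral>\<^sup>+x. ennreal (- v x) \<partial>lborel)" for v :: "real \<Rightarrow> real"
  have Eh_PN: "Eh v = enn2ereal (P v) - enn2ereal (N v)" for v by (simp add: Eh_def P_def N_def)
  have sm[measurable]: "(\<lambda>x. \<Sum>i\<in>I. u i x) \<in> borel_measurable borel"
    using um by (intro borel_measurable_sum) auto
  have cK: "ennreal (c*K) \<noteq> \<infinity>" by simp
  show ?thesis
  proof (cases "\<exists>i\<in>I. P (u i) = \<infinity>")
    case True
    then obtain i where i: "i \<in> I" "P (u i) = \<infinity>" by auto
    have "P (u i) \<le> P h + ennreal (c*K)"
      unfolding P_def
      by (rule pos_part_bound[OF um[OF i(1)] _ _ F FK c]) (use ae2[OF i(1)] in \<open>auto elim!: eventually_mono\<close>)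
    then have Ph: "P h = \<infinity>" using i by (auto simp: top_unique)
    then have Eh1: "Eh h = \<infinity>" by (simp add: Eh_PN)
    have "Eh (u i) = \<infinity>" using i by (simp add: Eh_PN)
    then have "(\<Sum>i\<in>I. Eh (u i)) = \<infinity>" using I i by (subst sum_Pinfty) auto
    then show ?thesis using Eh1 by simp
  next
    case False
    then have Pu: "\<And>i. i \<in> I \<Longrightarrow> P (u i) \<noteq> \<infinity>" by auto
    have "P h \<le> P (\<lambda>x. \<Sum>i\<in>I. u i x) + ennreal (c*K)"
      unfolding P_def
      by (rule pos_part_bound[OF _ sm _ F FK c]) (use ae1 in \<open>auto elim!: eventually_mono\<close>)
    also have "P (\<lambda>x. \<Sum>i\<in>I. u i x) \<le> (\<Sum>i\<in>I. P (u i))"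
    proof -
      have "P (\<lambda>x. \<Sum>i\<in>I. u i x) \<le> (\<integral>\<^sup>+x. (\<Sum>i\<in>I. ennreal (u i x)) \<partial>lborel)"
        unfolding P_def by (intro nn_integral_mono ennreal_sum_le I)
      also have "\<dots> = (\<Sum>i\<in>I. P (u i))"
        unfolding P_def by (intro nn_integral_sum) auto
      finally show ?thesis .
    qed
    finally have Ph: "P h \<noteq> \<infinity>" using Pu I by (auto simp: top_unique ennreal_add_eq_top)
    show ?thesis
    proof (cases "\<exists>i\<in>I. N (u i) = \<infinity>")
      case True
      then obtain i where i: "i \<in> I" "N (u i) = \<infinity>" by auto
      have "N (u i) \<le> N h + ennreal (c*K)"
        unfolding N_def
        by (rule pos_part_bound[OF _ _ _ F FK c]) (use ae3[OF i(1)] um[OF i(1)] in \<open>auto elim!: eventually_mono\<close>)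
      then have Nh: "N h = \<infinity>" using i by (auto simp: top_unique)
      then have Eh1: "Eh h = -\<infinity>" using Ph by (simp add: Eh_PN enn2ereal_fin)
      have Ei: "Eh (u i) = -\<infinity>" using i Pu[OF i(1)] by (simp add: Eh_PN enn2ereal_fin)
      have Ej: "Eh (u j) \<noteq> \<infinity>" if "j \<in> I" for j using Pu[OF that]
        by (cases "N (u j) = \<infinity>") (simp_all add: Eh_PN enn2ereal_fin)
      have s1: "(\<Sum>i\<in>I. Eh (u i)) \<noteq> \<infinity>" using Ej by (subst sum_Pinfty) auto
      have s2: "\<bar>\<Sum>i\<in>I. Eh (u i)\<bar> = \<infinity>" using I i Ei by (subst sum_Inf) (auto intro!: bexI[of _ i])
      have "(\<Sum>i\<in>I. Eh (u i)) = -\<infinity>" using s1 s2 by (cases "\<Sum>i\<in>I. Eh (u i)") auto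
      then show ?thesis using Eh1 by simp
    next
      case False
      then have Nu: "\<And>i. i \<in> I \<Longrightarrow> N (u i) \<noteq> \<infinity>" by auto
      have "N h \<le> N (\<lambda>x. \<Sum>i\<in>I. u i x) + ennreal (c*K)"
        unfolding N_def
        by (rule pos_part_bound[OF _ _ _ F FK c]) (use ae1 in \<open>auto elim!: eventually_mono\<close>)
      also have "N (\<lambda>x. \<Sum>i\<in>I. u i x) \<le> (\<Sum>i\<in>I. N (u i))"
      proof -
        have "N (\<lambda>x. \<Sum>i\<in>I. u i x) \<le> (\<integral>\<^sup>+x. (\<Sum>i\<in>I. ennreal (- u i x)) \<partial>lborel)"
          unfolding N_def using ennreal_sum_le[OF I, of "\<lambda>i. - u i _"]
          by (intro nn_integral_mono) (simp add: sum_negf)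
        also have "\<dots> = (\<Sum>i\<in>I. N (u i))"
          unfolding N_def by (intro nn_integral_sum) auto
        finally show ?thesis .
      qed
      finally have Nh: "N h \<noteq> \<infinity>" using Nu I by (auto simp: top_unique ennreal_add_eq_top)
      have ih: "integrable lborel h" using Ph Nh
        unfolding real_integrable_def P_def N_def by auto
      have iu: "integrable lborel (u i)" if "i \<in> I" for i using Pu[OF that] Nu[OF that] um[OF that]
        unfolding real_integrable_def P_def N_def by auto
      have iF: "integrable lborel F"
        using FK by (intro integrableI_nonneg) (auto simp: F top_unique less_top[symmetric] dest: order.strict_trans1[OF _ ennreal_less_top])
      have intF: "integral\<^sup>L lborel F \<le> K"
      proof -
        have "integral\<^sup>L lborel F = enn2real (\<integral>\<^sup>+x. ennreal (F x) \<partial>lborel)"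
          by (rule integral_eq_nn_integral) (auto simp: F)
        also have "\<dots> \<le> enn2real (ennreal K)" using FK by (intro enn2real_mono) auto
        finally show ?thesis using K by simp
      qed
      have E1: "Eh h = ereal (integral\<^sup>L lborel h)" by (rule Eh_integral[OF ih])
      have E2: "(\<Sum>i\<in>I. Eh (u i)) = ereal (\<Sum>i\<in>I. integral\<^sup>L lborel (u i))"
        using Eh_integral[OF iu] by simp
      have isum: "integrable lborel (\<lambda>x. \<Sum>i\<in>I. u i x)" using Bochner_Integration.integrable_sum[of I lborel u] iu by blast
      have "integral\<^sup>L lborel h - (\<Sum>i\<in>I. integral\<^sup>L lborel (u i)) = integral\<^sup>L lborel (\<lambda>x. h x - (\<Sum>i\<in>I. u i x))"
        using ih isum iu by (simp add: integral_diff integral_sum)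
      also have "\<bar>\<dots>\<bar> \<le> integral\<^sup>L lborel (\<lambda>x. \<bar>h x - (\<Sum>i\<in>I. u i x)\<bar>)"
        using integral_norm_bound[of lborel "\<lambda>x. h x - (\<Sum>i\<in>I. u i x)"] by simp
      also have "\<dots> \<le> integral\<^sup>L lborel (\<lambda>x. c * F x)"
        using ih isum iF ae1 by (intro integral_mono_AE) auto
      also have "\<dots> = c * integral\<^sup>L lborel F" by simp
      also have "\<dots> \<le> c * K" using intF c by (intro mult_left_mono) auto
      finally have "\<bar>integral\<^sup>L lborel h - (\<Sum>i\<in>I. integral\<^sup>L lborel (u i))\<bar> \<le> c * K" .
      then show ?thesis unfolding E1 E2 by auto
    qed
  qed
qed

lemma pointwise_bounds:
  fixes x a :: "nat \<Rightarrow> real"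
  assumes I: "finite I" and x: "\<And>i. i \<in> I \<Longrightarrow> x i \<ge> 0" and a: "\<And>i. i \<in> I \<Longrightarrow> a i > 0"
  defines "s \<equiv> (\<Sum>i\<in>I. x i)" and "c \<equiv> real (card I) + (\<Sum>i\<in>I. \<bar>ln (a i)\<bar>)"
  shows "\<bar>phi s - (\<Sum>i\<in>I. a i * phi (x i / a i))\<bar> \<le> c * s"
    and "\<And>i. i \<in> I \<Longrightarrow> max 0 (a i * phi (x i / a i)) \<le> max 0 (phi s) + c * s"
    and "\<And>i. i \<in> I \<Longrightarrow> max 0 (- (a i * phi (x i / a i))) \<le> max 0 (- phi s) + c * s"
proof -
  have s0: "s \<ge> 0" unfolding s_def using x by (intro sum_nonneg) auto
  have xs: "x i \<le> s" if "i \<in> I" for i unfolding s_def using x that I by (intro member_le_sum) auto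
  have sc: "\<bar>ln (a i)\<bar> \<le> (\<Sum>i\<in>I. \<bar>ln (a i)\<bar>)" if "i \<in> I" for i
    using that I by (intro member_le_sum) auto
  have sl0: "(\<Sum>i\<in>I. \<bar>ln (a i)\<bar>) \<ge> 0" by (intro sum_nonneg) auto
  have u: "a i * phi (x i / a i) = phi (x i) - x i * ln (a i)" if "i \<in> I" for i
    using phi_scale[OF x[OF that] a[OF that]] .
  have "(\<Sum>i\<in>I. a i * phi (x i / a i)) = (\<Sum>i\<in>I. phi (x i)) - (\<Sum>i\<in>I. x i * ln (a i))"
    using u by (simp add: sum_subtractf)
  moreover have "(\<Sum>i\<in>I. phi (x i)) \<le> phi s" unfolding s_def by (rule phi_sum_lower[OF I x])
  moreover have "phi s \<le> (\<Sum>i\<in>I. phi (x i)) + real (card I) * s" unfolding s_def by (rule phi_sum_upper[OF I x])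
  moreover have "\<bar>\<Sum>i\<in>I. x i * ln (a i)\<bar> \<le> s * (\<Sum>i\<in>I. \<bar>ln (a i)\<bar>)"
  proof -
    have "\<bar>\<Sum>i\<in>I. x i * ln (a i)\<bar> \<le> (\<Sum>i\<in>I. \<bar>x i * ln (a i)\<bar>)" by (rule sum_abs)
    also have "\<dots> \<le> (\<Sum>i\<in>I. s * \<bar>ln (a i)\<bar>)"
      using x xs by (intro sum_mono) (auto simp: abs_mult intro: mult_right_mono)
    finally show ?thesis by (simp add: sum_distrib_left)
  qed
  ultimately show "\<bar>phi s - (\<Sum>i\<in>I. a i * phi (x i / a i))\<bar> \<le> c * s"
    unfolding c_def by (simp add: algebra_simps abs_le_iff)
next
  fix i assume i: "i \<in> I"
  have s0: "s \<ge> 0" unfolding s_def using x by (intro sum_nonneg) auto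
  have xs: "x i \<le> s" unfolding s_def using x i I by (intro member_le_sum) auto
  have sc: "\<bar>ln (a i)\<bar> \<le> (\<Sum>i\<in>I. \<bar>ln (a i)\<bar>)" using i I by (intro member_le_sum) auto
  have c1: "1 + \<bar>ln (a i)\<bar> \<le> c"
  proof -
    have "card I \<ge> 1" using i I by (metis card_0_eq empty_iff less_one not_le)
    then show ?thesis unfolding c_def using sc by simp
  qed
  have u: "a i * phi (x i / a i) = phi (x i) - x i * ln (a i)"
    using phi_scale[OF x[OF i] a[OF i]] .
  have e: "\<bar>x i * ln (a i)\<bar> \<le> s * \<bar>ln (a i)\<bar>" using x[OF i] xs by (auto simp: abs_mult intro: mult_right_mono)
  have cs: "s * \<bar>ln (a i)\<bar> + s \<le> c * s" using c1 s0 by (metis add.commute distrib_left mult.commute mult.right_neutral mult_right_mono)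
  have "max 0 (phi (x i)) \<le> max 0 (phi s)" by (rule phi_pos_mono[OF x[OF i] xs])
  then show "max 0 (a i * phi (x i / a i)) \<le> max 0 (phi s) + c * s"
    using u e cs s0 by (simp add: max_def abs_le_iff split: if_splits; smt (verit) mult_nonneg_nonneg abs_ge_zero)
  have "max 0 (- phi (x i)) \<le> max 0 (- phi s) + s" by (rule phi_neg_bound[OF x[OF i] xs])
  then show "max 0 (- (a i * phi (x i / a i))) \<le> max 0 (- phi s) + c * s"
    using u e cs s0 by (simp add: max_def abs_le_iff split: if_splits; smt (verit) mult_nonneg_nonneg abs_ge_zero)
qed

lemma Eh_cong_AE: "AE x in lborel. h x = h' x \<Longrightarrow> Eh h = Eh h'"
  unfolding Eh_def
  by (rule arg_cong2[where f="\<lambda>a b. enn2ereal a - enn2ereal b"]; rule nn_integral_cong_AE; auto elim!: eventually_mono)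

lemma Eh_scale:
  assumes a: "a > 0" and [measurable]: "v \<in> borel_measurable borel"
  shows "ereal a * Eh v = Eh (\<lambda>x. a * v x)"
proof -
  have 1: "(\<integral>\<^sup>+x. ennreal (a * v x) \<partial>lborel) = ennreal a * (\<integral>\<^sup>+x. ennreal (v x) \<partial>lborel)"
    using a by (simp add: ennreal_mult' nn_integral_cmult)
  have 2: "(\<integral>\<^sup>+x. ennreal (- (a * v x)) \<partial>lborel) = ennreal a * (\<integral>\<^sup>+x. ennreal (- v x) \<partial>lborel)"
  proof -
    have "(\<lambda>x. ennreal (- (a * v x))) = (\<lambda>x. ennreal a * ennreal (- v x))"
      using a by (auto simp: ennreal_mult'[symmetric])
    then show ?thesis by (simp add: nn_integral_cmult)
  qed
  have gen: "ereal a * (enn2ereal p - enn2ereal q) = enn2ereal (ennreal a * p) - enn2ereal (ennreal a * q)" for p q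
    using a
    by (cases p rule: ennreal_cases; cases q rule: ennreal_cases)
       (auto simp: ennreal_mult'[symmetric] ennreal_mult_top  ereal_mult_minus_right right_diff_distrib ennreal_top_mult)
  show ?thesis unfolding Eh_def 1 2 by (rule gen)
qed

lemma core:
  fixes G :: "nat \<Rightarrow> real \<Rightarrow> ennreal" and a :: "nat \<Rightarrow> real" and I :: "nat set"
  assumes I: "finite I" and Gm[measurable]: "\<And>i. i \<in> I \<Longrightarrow> G i \<in> borel_measurable borel"
    and a: "\<And>i. i \<in> I \<Longrightarrow> a i > 0"
    and Gint: "\<And>i. i \<in> I \<Longrightarrow> (\<integral>\<^sup>+x. G i x \<partial>lborel) = ennreal (a i)"
  defines "X \<equiv> ent (density lborel (\<lambda>x. \<Sum>i\<in>I. G i x))"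
    and "Y \<equiv> (\<Sum>i\<in>I. ereal (a i) * ent (scale_measure (ennreal (1 / a i)) (density lborel (G i))))"
    and "C \<equiv> (real (card I) + (\<Sum>i\<in>I. \<bar>ln (a i)\<bar>)) * (\<Sum>i\<in>I. a i)"
  shows "X \<le> Y + ereal C \<and> Y \<le> X + ereal C"
proof -
  define f where "f i x = enn2real (G i x)" for i x
  define fs where "fs x = (\<Sum>i\<in>I. f i x)" for x
  define c where "c = real (card I) + (\<Sum>i\<in>I. \<bar>ln (a i)\<bar>)"
  define K where "K = (\<Sum>i\<in>I. a i)"
  have fm[measurable]: "f i \<in> borel_measurable borel" if "i \<in> I" for i
    unfolding f_def[abs_def] using Gm[OF that] by measurable
  have fsm[measurable]: "fs \<in> borel_measurable borel"
    unfolding fs_def[abs_def] using fm by (intro borel_measurable_sum) auto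
  have f0: "f i x \<ge> 0" for i x by (simp add: f_def)
  have fs0: "fs x \<ge> 0" for x unfolding fs_def by (intro sum_nonneg) (simp add: f0)
  have c0: "c \<ge> 0" unfolding c_def by (intro add_nonneg_nonneg sum_nonneg) auto
  have K0: "K \<ge> 0" unfolding K_def using a by (intro sum_nonneg) (auto intro: less_imp_le)
  have sumG: "(\<lambda>x. \<Sum>i\<in>I. G i x) \<in> borel_measurable borel" by (intro borel_measurable_sum) auto
  have aefin: "AE x in lborel. \<forall>i\<in>I. G i x \<noteq> \<infinity>"
  proof (rule AE_finite_allI[OF I])
    fix i assume i: "i \<in> I"
    show "AE x in lborel. G i x \<noteq> \<infinity>"
      by (rule nn_integral_PInf_AE) (use Gint[OF i] Gm[OF i] in auto)
  qed
  have X: "X = Eh (\<lambda>x. phi (fs x))"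
  proof -
    have "X = Eh (\<lambda>x. phi (enn2real (\<Sum>i\<in>I. G i x)))"
      unfolding X_def ent_density[OF sumG] Eh_def ..
    also have "\<dots> = Eh (\<lambda>x. phi (fs x))"
    proof (rule Eh_cong_AE)
      show "AE x in lborel. phi (enn2real (\<Sum>i\<in>I. G i x)) = phi (fs x)"
        using aefin
      proof eventually_elim
        case (elim x)
        have "(\<Sum>i\<in>I. G i x) = (\<Sum>i\<in>I. ennreal (f i x))"
          using elim by (intro sum.cong) (auto simp: f_def less_top)
        also have "\<dots> = ennreal (fs x)" unfolding fs_def by (simp add: f0)
        finally show ?case using fs0 by simp
      qed
    qed
    finally show ?thesis .
  qed
  define u where "u i x = a i * phi (f i x / a i)" for i x
  have um[measurable]: "u i \<in> borel_measurable borel" if "i \<in> I" for i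
    unfolding u_def[abs_def] phi_def using fm[OF that] by measurable
  have Y: "Y = (\<Sum>i\<in>I. Eh (u i))"
    unfolding Y_def
  proof (rule sum.cong[OF refl])
    fix i assume i: "i \<in> I"
    have ai: "a i > 0" by (rule a[OF i])
    have "ent (scale_measure (ennreal (1 / a i)) (density lborel (G i)))
        = ent (density lborel (\<lambda>x. ennreal (1 / a i) * G i x))"
      using ai by (subst scale_density) (auto simp: Gm[OF i])
    also have "\<dots> = Eh (\<lambda>x. phi (enn2real (ennreal (1 / a i) * G i x)))"
    proof -
      have mG: "(\<lambda>x. ennreal (1/a i) * G i x) \<in> borel_measurable borel" using Gm[OF i] by measurable
      then show ?thesis by (simp add: ent_density Eh_def)
    qed
    also have "\<dots> = Eh (\<lambda>x. phi (f i x / a i))"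
      using ai by (simp add: enn2real_mult f_def)
    finally have "ereal (a i) * ent (scale_measure (ennreal (1 / a i)) (density lborel (G i)))
        = ereal (a i) * Eh (\<lambda>x. phi (f i x / a i))" by simp
    also have "\<dots> = Eh (u i)"
      unfolding u_def using ai fm[OF i] by (subst Eh_scale) (auto simp: phi_def)
    finally show "ereal (a i) * ent (scale_measure (ennreal (1 / a i)) (density lborel (G i))) = Eh (u i)" .
  qed
  have FK: "(\<integral>\<^sup>+x. ennreal (fs x) \<partial>lborel) \<le> ennreal K"
  proof -
    have "(\<integral>\<^sup>+x. ennreal (fs x) \<partial>lborel) \<le> (\<integral>\<^sup>+x. (\<Sum>i\<in>I. G i x) \<partial>lborel)"
    proof (rule nn_integral_mono)
      fix x
      have "ennreal (fs x) = (\<Sum>i\<in>I. ennreal (f i x))" unfolding fs_def by (simp add: f0)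
      also have "\<dots> \<le> (\<Sum>i\<in>I. G i x)"
        by (intro sum_mono) (auto simp: f_def ennreal_enn2real_if)
      finally show "ennreal (fs x) \<le> (\<Sum>i\<in>I. G i x)" .
    qed
    also have "\<dots> = (\<Sum>i\<in>I. (\<integral>\<^sup>+x. G i x \<partial>lborel))"
      by (rule nn_integral_sum) auto
    also have "\<dots> = (\<Sum>i\<in>I. ennreal (a i))" using Gint by simp
    also have "\<dots> = ennreal K" unfolding K_def using a by (intro sum_ennreal) (auto intro: less_imp_le)
    finally show ?thesis .
  qed
  have cmp: "Eh (\<lambda>x. phi (fs x)) \<le> (\<Sum>i\<in>I. Eh (u i)) + ereal (c*K) \<and> (\<Sum>i\<in>I. Eh (u i)) \<le> Eh (\<lambda>x. phi (fs x)) + ereal (c*K)"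
  proof (rule E_compare[OF I _ fsm um fs0 FK c0 K0])
    show "(\<lambda>x. phi (fs x)) \<in> borel_measurable borel" unfolding phi_def by measurable
    show "AE x in lborel. \<bar>phi (fs x) - (\<Sum>i\<in>I. u i x)\<bar> \<le> c * fs x"
      unfolding u_def fs_def c_def using pointwise_bounds(1)[where x="\<lambda>j. f j x" and a=a and I=I for x] I f0 a by (intro AE_I2) auto
    show "AE x in lborel. max 0 (u i x) \<le> max 0 (phi (fs x)) + c * fs x" if "i \<in> I" for i
      unfolding u_def fs_def c_def using pointwise_bounds(2)[where x="\<lambda>j. f j x" and a=a and I=I for x] I f0 a that by (intro AE_I2) auto
    show "AE x in lborel. max 0 (- u i x) \<le> max 0 (- phi (fs x)) + c * fs x" if "i \<in> I" for i
      unfolding u_def fs_def c_def using pointwise_bounds(3)[where x="\<lambda>j. f j x" and a=a and I=I for x] I f0 a that by (intro AE_I2) auto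
  qed
  have "C = c * K" unfolding C_def c_def K_def ..
  then show ?thesis using cmp X Y by simp
qed

lemma conv_meas:
  fixes M :: "real measure" and g :: "real \<Rightarrow> ennreal"
  assumes M: "finite_measure M" and [measurable_cong]: "sets M = sets borel"
    and g[measurable]: "g \<in> borel_measurable borel"
  shows "(\<lambda>x. \<integral>\<^sup>+y. g (x - y) \<partial>M) \<in> borel_measurable borel"
proof -
  interpret M: finite_measure M by fact
  show ?thesis by (rule M.borel_measurable_nn_integral) measurable
qed

theorem lemma2p4:
  fixes \<mu> \<nu> :: "real measure" and \<nu>i :: "nat \<Rightarrow> real measure"
    and a :: "nat \<Rightarrow> real" and n :: nat
  assumes mu_prob: "prob_space \<mu>" and mu_sets: "sets \<mu> = sets borel"
    and nui_fin: "\<And>i. i \<in> {1..n} \<Longrightarrow> finite_measure (\<nu>i i)"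
    and nui_sets: "\<And>i. i \<in> {1..n} \<Longrightarrow> sets (\<nu>i i) = sets borel"
    and nui_mass: "\<And>i. i \<in> {1..n} \<Longrightarrow> emeasure (\<nu>i i) UNIV = ennreal (a i)"
    and a_pos: "\<And>i. i \<in> {1..n} \<Longrightarrow> a i > 0"
    and nu_sets: "sets \<nu> = sets borel"
    and nu_sum: "\<And>A. A \<in> sets borel \<Longrightarrow> emeasure \<nu> A = (\<Sum>i\<in>{1..n}. emeasure (\<nu>i i) A)"
    and ent_fin: "\<And>i. i \<in> {1..n} \<Longrightarrow> \<bar>ent (scale_measure (ennreal (1 / a i)) (\<nu>i i))\<bar> \<noteq> \<infinity>"
  shows "Liminf (at_right 0) (\<lambda>t. ent (\<mu> \<star> dil t \<nu>) / ereal \<bar>ln t\<bar>)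
       = Liminf (at_right 0) (\<lambda>t. ereal (1 / \<bar>ln t\<bar>) *
            (\<Sum>i\<in>{1..n}. ereal (a i) * ent (scale_measure (ennreal (1 / a i)) (\<mu> \<star> dil t (\<nu>i i)))))"
proof -
  let ?I = "{1..n}"
  interpret mu: prob_space \<mu> by fact
  have muf: "finite_measure \<mu>" by unfold_locales
  define q where "q i = (SOME q. has_lebesgue_density (scale_measure (ennreal (1 / a i)) (\<nu>i i)) q)" for i
  have hq: "has_lebesgue_density (scale_measure (ennreal (1 / a i)) (\<nu>i i)) (q i)" if i: "i \<in> ?I" for i
  proof -
    have "\<exists>q. has_lebesgue_density (scale_measure (ennreal (1 / a i)) (\<nu>i i)) q"
      using ent_fin[OF i] by (auto simp: ent_def split: if_splits)
    then show ?thesis unfolding q_def by (rule someI_ex)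
  qed
  define g where "g i x = ennreal (a i) * q i x" for i x
  have qm[measurable]: "q i \<in> borel_measurable borel" if "i \<in> ?I" for i
    using hq[OF that] by (simp add: has_lebesgue_density_def)
  have gm[measurable]: "g i \<in> borel_measurable borel" if "i \<in> ?I" for i
    unfolding g_def[abs_def] using qm[OF that] by measurable
  have nui_dens: "\<nu>i i = density lborel (g i)" if i: "i \<in> ?I" for i
  proof (rule measure_eqI)
    show "sets (\<nu>i i) = sets (density lborel (g i))" using nui_sets[OF i] by simp
    fix A assume "A \<in> sets (\<nu>i i)"
    then have A[measurable]: "A \<in> sets borel" using nui_sets[OF i] by simp
    have eq: "scale_measure (ennreal (1 / a i)) (\<nu>i i) = density lborel (q i)"
      using hq[OF i] by (simp add: has_lebesgue_density_def)
    have "emeasure (\<nu>i i) A = ennreal (a i) * (ennreal (1 / a i) * emeasure (\<nu>i i) A)"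
      using a_pos[OF i] by (simp add: mult.assoc[symmetric] ennreal_mult[symmetric])
    also have "ennreal (1 / a i) * emeasure (\<nu>i i) A = emeasure (density lborel (q i)) A"
      by (simp flip: eq)
    also have "ennreal (a i) * emeasure (density lborel (q i)) A = emeasure (density lborel (g i)) A"
      using qm[OF i] gm[OF i] by (simp add: emeasure_density g_def nn_integral_cmult[symmetric] mult.assoc)
    finally show "emeasure (\<nu>i i) A = emeasure (density lborel (g i)) A" .
  qed
  have sgm[measurable]: "(\<lambda>x. \<Sum>i\<in>?I. g i x) \<in> borel_measurable borel"
    by (intro borel_measurable_sum) (use gm in auto)
  have nu_dens: "\<nu> = density lborel (\<lambda>x. \<Sum>i\<in>?I. g i x)"
  proof (rule measure_eqI)
    show "sets \<nu> = sets (density lborel (\<lambda>x. \<Sum>i\<in>?I. g i x))" using nu_sets by simp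
    fix A assume "A \<in> sets \<nu>"
    then have A[measurable]: "A \<in> sets borel" using nu_sets by simp
    have "emeasure \<nu> A = (\<Sum>i\<in>?I. emeasure (density lborel (g i)) A)"
      using nu_sum[OF A] nui_dens by simp
    also have "\<dots> = (\<Sum>i\<in>?I. \<integral>\<^sup>+x. g i x * indicator A x \<partial>lborel)"
      by (intro sum.cong refl) (simp add: emeasure_density)
    also have "\<dots> = (\<integral>\<^sup>+x. (\<Sum>i\<in>?I. g i x * indicator A x) \<partial>lborel)"
      by (rule nn_integral_sum[symmetric]) auto
    also have "\<dots> = emeasure (density lborel (\<lambda>x. \<Sum>i\<in>?I. g i x)) A"
      by (simp add: emeasure_density sum_distrib_right)
    finally show "emeasure \<nu> A = emeasure (density lborel (\<lambda>x. \<Sum>i\<in>?I. g i x)) A" .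
  qed
  define C where "C = (real (card ?I) + (\<Sum>i\<in>?I. \<bar>ln (a i)\<bar>)) * (\<Sum>i\<in>?I. a i)"
  have C0: "C \<ge> 0" unfolding C_def using a_pos
    by (intro mult_nonneg_nonneg add_nonneg_nonneg sum_nonneg) (auto intro: less_imp_le)
  define X where "X t = ent (\<mu> \<star> dil t \<nu>)" for t
  define Y where "Y t = (\<Sum>i\<in>?I. ereal (a i) * ent (scale_measure (ennreal (1 / a i)) (\<mu> \<star> dil t (\<nu>i i))))" for t
  have main: "X t \<le> Y t + ereal C \<and> Y t \<le> X t + ereal C" if t: "t > 0" for t
  proof -
    define gt where "gt i x = ennreal (1/t) * g i (x / t)" for i x
    define Gt where "Gt i x = (\<integral>\<^sup>+y. gt i (x - y) \<partial>\<mu>)" for i x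
    have gtm[measurable]: "gt i \<in> borel_measurable borel" if "i \<in> ?I" for i
      unfolding gt_def[abs_def] using gm[OF that] by measurable
    have Gtm: "Gt i \<in> borel_measurable borel" if "i \<in> ?I" for i
      unfolding Gt_def[abs_def] by (rule conv_meas[OF muf mu_sets gtm[OF that]])
    have dili: "dil t (\<nu>i i) = density lborel (gt i)" if "i \<in> ?I" for i
      unfolding nui_dens[OF that] gt_def[abs_def] by (rule dil_density[OF t gm[OF that]])
    have dilfin: "finite_measure (dil t (\<nu>i i))" if "i \<in> ?I" for i
      unfolding dil_def by (rule finite_measure.finite_measure_distr[OF nui_fin[OF that]]) (simp add: measurable_cong_sets[OF nui_sets[OF that] refl])
    have convi: "\<mu> \<star> dil t (\<nu>i i) = density lborel (Gt i)" if i: "i \<in> ?I" for i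
      unfolding dili[OF i] Gt_def[abs_def]
      by (rule conv_density[OF muf mu_sets gtm[OF i]]) (use dilfin[OF i] dili[OF i] in simp)
    have dilnu: "dil t \<nu> = density lborel (\<lambda>x. \<Sum>i\<in>?I. gt i x)"
      unfolding nu_dens gt_def by (subst dil_density[OF t sgm]) (simp add: sum_distrib_left)
    have sgtm: "(\<lambda>x. \<Sum>i\<in>?I. gt i x) \<in> borel_measurable borel"
      by (intro borel_measurable_sum) (use gtm in auto)
    have dilnufin: "finite_measure (dil t \<nu>)"
    proof
      have "emeasure (dil t \<nu>) (space (dil t \<nu>)) = emeasure \<nu> UNIV"
        unfolding dil_def using nu_sets by (subst emeasure_distr) (auto dest: sets_eq_imp_space_eq)
      also have "\<dots> = (\<Sum>i\<in>?I. ennreal (a i))" using nu_sum[of UNIV] nui_mass by simp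
      finally show "emeasure (dil t \<nu>) (space (dil t \<nu>)) \<noteq> \<infinity>" by simp
    qed
    have conv: "\<mu> \<star> dil t \<nu> = density lborel (\<lambda>x. \<Sum>i\<in>?I. Gt i x)"
    proof -
      have "\<mu> \<star> dil t \<nu> = density lborel (\<lambda>x. \<integral>\<^sup>+y. (\<Sum>i\<in>?I. gt i (x - y)) \<partial>\<mu>)"
        unfolding dilnu by (rule conv_density[OF muf mu_sets sgtm]) (use dilnufin dilnu in simp)
      also have "(\<lambda>x. \<integral>\<^sup>+y. (\<Sum>i\<in>?I. gt i (x - y)) \<partial>\<mu>) = (\<lambda>x. \<Sum>i\<in>?I. Gt i x)"
      proof
        fix x
        show "(\<integral>\<^sup>+y. (\<Sum>i\<in>?I. gt i (x - y)) \<partial>\<mu>) = (\<Sum>i\<in>?I. Gt i x)"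
          unfolding Gt_def
        proof (rule nn_integral_sum)
          fix i assume i: "i \<in> ?I"
          have "(\<lambda>y. gt i (x - y)) \<in> borel_measurable borel" using gtm[OF i] by measurable
          then show "(\<lambda>y. gt i (x - y)) \<in> borel_measurable \<mu>"
            using mu_sets by (simp cong: measurable_cong_sets)
        qed
      qed
      finally show ?thesis .
    qed
    have Gtint: "(\<integral>\<^sup>+x. Gt i x \<partial>lborel) = ennreal (a i)" if i: "i \<in> ?I" for i
    proof -
      have "(\<integral>\<^sup>+x. Gt i x \<partial>lborel) = emeasure (\<mu> \<star> dil t (\<nu>i i)) UNIV"
        using Gtm[OF i] by (simp add: convi[OF i] emeasure_density)
      also have "\<dots> = \<integral>\<^sup>+x. \<integral>\<^sup>+y. indicator UNIV (x + y) \<partial>dil t (\<nu>i i) \<partial>\<mu>"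
        by (rule convolution_emeasure') (use muf dilfin[OF i] mu_sets in \<open>auto simp: dil_def\<close>)
      also have "\<dots> = \<integral>\<^sup>+x. emeasure (dil t (\<nu>i i)) UNIV \<partial>\<mu>"
      proof -
        have sp: "space (dil t (\<nu>i i)) = UNIV" by (simp add: dil_def)
        show ?thesis using sp by (simp add: nn_integral_indicator[of "space _", symmetric] del: nn_integral_indicator)
      qed
      also have "\<dots> = emeasure (dil t (\<nu>i i)) UNIV"
        by (simp add: mu.emeasure_space_1)
      also have "\<dots> = emeasure (\<nu>i i) UNIV"
        unfolding dil_def using nui_sets[OF i] by (subst emeasure_distr) (auto dest: sets_eq_imp_space_eq)
      finally show ?thesis using nui_mass[OF i] by simp
    qed
    have "ent (density lborel (\<lambda>x. \<Sum>i\<in>?I. Gt i x)) \<le>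
        (\<Sum>i\<in>?I. ereal (a i) * ent (scale_measure (ennreal (1 / a i)) (density lborel (Gt i)))) + ereal C \<and>
        (\<Sum>i\<in>?I. ereal (a i) * ent (scale_measure (ennreal (1 / a i)) (density lborel (Gt i)))) \<le>
        ent (density lborel (\<lambda>x. \<Sum>i\<in>?I. Gt i x)) + ereal C"
      unfolding C_def by (rule core) (use Gtm a_pos Gtint in auto)
    moreover have "(\<Sum>i\<in>?I. ereal (a i) * ent (scale_measure (ennreal (1 / a i)) (density lborel (Gt i)))) = Y t"
      unfolding Y_def by (intro sum.cong refl) (simp add: convi)
    ultimately show ?thesis unfolding X_def conv by simp
  qed
  have ev: "\<forall>\<^sub>F t in at_right 0. X t \<le> Y t + ereal C \<and> Y t \<le> X t + ereal C"
    using eventually_at_right_less[of "0::real"] by eventually_elim (rule main)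
  have lhs: "Liminf (at_right 0) (\<lambda>t. ent (\<mu> \<star> dil t \<nu>) / ereal \<bar>ln t\<bar>)
      = Liminf (at_right 0) (\<lambda>t. ereal (1 / \<bar>ln t\<bar>) * X t)"
  proof (rule Liminf_eq)
    show "\<forall>\<^sub>F t in at_right 0. ent (\<mu> \<star> dil t \<nu>) / ereal \<bar>ln t\<bar> = ereal (1 / \<bar>ln t\<bar>) * X t"
    proof -
      have e01: "\<forall>\<^sub>F t in at_right (0::real). t \<in> {0<..<1}" by (rule eventually_at_right_real) simp
      then show ?thesis
    proof eventually_elim
      case (elim t)
      then have "ln t \<noteq> 0" by auto
      then show ?case by (simp add: X_def divide_ereal_def mult.commute inverse_eq_divide)
    qed
    qed
  qed
  show ?thesis
    unfolding lhs Y_def[symmetric]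
  proof (rule antisym)
    show "Liminf (at_right 0) (\<lambda>t. ereal (1 / \<bar>ln t\<bar>) * X t) \<le> Liminf (at_right 0) (\<lambda>t. ereal (1 / \<bar>ln t\<bar>) * Y t)"
      by (rule liminf_half[OF C0]) (use ev in \<open>auto elim: eventually_mono\<close>)
    show "Liminf (at_right 0) (\<lambda>t. ereal (1 / \<bar>ln t\<bar>) * Y t) \<le> Liminf (at_right 0) (\<lambda>t. ereal (1 / \<bar>ln t\<bar>) * X t)"
      by (rule liminf_half[OF C0]) (use ev in \<open>auto elim: eventually_mono\<close>)
  qed
qed

end
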